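(* If a finite poset $P$ contains an articulation point, i.e., a point $x\in P$ comparable with every other point of $P$, then $P$ is an $\exists$-game.
   Context: A finite poset $P$ defines a poset game: two players alternate moves; a move consists of choosing a point $x$ of the current poset $Q$ and replacing $Q$ by $Q_x:=\{y\in Q: x\not\le y\}$ (i.e., removing $x$ and every point above it); the first player unable to move (because the poset is empty) loses. $P$ is an $\exists$-game if the player who moves first has a winning strategy, and a $\forall$-game otherwise. *)

theory Defs
  imports Main
begin

definition partial_order_rel :: "'a set \<Rightarrow> ('a \<Rightarrow> 'a \<Rightarrow> bool) \<Rightarrow> bool" where
  "partial_order_rel P le \<longleftrightarrow>
     (\<forall>x\<in>P. le x x) \<and>
     (\<forall>x\<in>P. \<forall>y\<in>P. le x y \<and> le y x \<longrightarrow> x = y) \<and>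
     (\<forall>x\<in>P. \<forall>y\<in>P. \<forall>z\<in>P. le x y \<and> le y z \<longrightarrow> le x z)"

definition poset_move :: "('a \<Rightarrow> 'a \<Rightarrow> bool) \<Rightarrow> 'a set \<Rightarrow> 'a \<Rightarrow> 'a set" where
  "poset_move le Q x = {y \<in> Q. \<not> le x y}"

text \<open>first_wins: the player to move has a winning strategy (exists-game);
first_loses: the player to move loses (forall-game).  For finite Q exactly one holds.\<close>
inductive first_wins and first_loses for le :: "'a \<Rightarrow> 'a \<Rightarrow> bool" where
  win: "x \<in> Q \<Longrightarrow> first_loses le (poset_move le Q x) \<Longrightarrow> first_wins le Q"
| lose: "(\<forall>x. x \<in> Q \<longrightarrow> first_wins le (poset_move le Q x)) \<Longrightarrow> first_loses le Q"

definition exists_game :: "'a set \<Rightarrow> ('a \<Rightarrow> 'a \<Rightarrow> bool) \<Rightarrow> bool" where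
  "exists_game P le \<longleftrightarrow> first_wins le P"

end

theory Submission
  imports Defs
begin

lemma determ:
  assumes "finite Q" "\<forall>x\<in>Q. le x x"
  shows "first_wins le Q \<or> first_loses le Q"
  using assms
proof (induction "card Q" arbitrary: Q rule: less_induct)
  case less
  show ?case
  proof (cases "\<exists>x\<in>Q. first_loses le (poset_move le Q x)")
    case True
    then show ?thesis by (auto intro: first_wins_first_loses.win)
  next
    case False
    have "\<forall>x. x \<in> Q \<longrightarrow> first_wins le (poset_move le Q x)"
    proof (intro allI impI)
      fix x assume x: "x \<in> Q"
      have sub: "poset_move le Q x \<subseteq> Q" by (auto simp: poset_move_def)
      have "x \<notin> poset_move le Q x" using x less.prems(2) by (auto simp: poset_move_def)
      hence "card (poset_move le Q x) < card Q"
        using sub x less.prems(1) by (metis psubsetI psubset_card_mono)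
      moreover have "finite (poset_move le Q x)" using sub less.prems(1) finite_subset by blast
      moreover have "\<forall>y\<in>poset_move le Q x. le y y" using sub less.prems(2) by blast
      ultimately have "first_wins le (poset_move le Q x) \<or> first_loses le (poset_move le Q x)"
        using less.hyps by blast
      then show "first_wins le (poset_move le Q x)" using False x by blast
    qed
    then show ?thesis by (auto intro: first_wins_first_loses.lose)
  qed
qed

theorem mainTheorem2:
  fixes P :: "'a set" and le :: "'a \<Rightarrow> 'a \<Rightarrow> bool" and x :: 'a
  assumes "finite P"
    and "partial_order_rel P le"
    and "x \<in> P"
    and "\<forall>y\<in>P. y \<noteq> x \<longrightarrow> le x y \<or> le y x"
  shows "exists_game P le"
proof -
  have refl: "\<forall>y\<in>P. le y y" and trans: "\<forall>a\<in>P. \<forall>b\<in>P. \<forall>c\<in>P. le a b \<and> le b c \<longrightarrow> le a c"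
    using assms(2) unfolding partial_order_rel_def by blast+
  let ?Px = "poset_move le P x"
  have subx: "?Px \<subseteq> P" by (auto simp: poset_move_def)
  have "first_wins le P"
  proof (cases "first_loses le ?Px")
    case True
    then show ?thesis using assms(3) by (rule first_wins_first_loses.win[rotated])
  next
    case False
    have "first_wins le ?Px"
      using determ[of ?Px le] False subx refl assms(1) finite_subset by blast
    then obtain y where y: "y \<in> ?Px" and yl: "first_loses le (poset_move le ?Px y)"
      by (cases rule: first_wins.cases) auto
    have yP: "y \<in> P" and nxy: "\<not> le x y" using y by (auto simp: poset_move_def)
    have "y \<noteq> x" using nxy refl assms(3) by blast
    hence yx: "le y x" using assms(4) yP nxy by blast
    have "poset_move le ?Px y = poset_move le P y"
      unfolding poset_move_def using trans yP assms(3) yx by blast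
    with yl yP show ?thesis by (auto intro: first_wins_first_loses.win)
  qed
  then show ?thesis by (simp add: exists_game_def)
qed

end
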